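(* Let $m\ge 2$, $n\ge1$ be integers, let $\mathcal P=(p_{i_1 i_2\dots i_m})\in\mathbb R^{[m,n]}$ be a transition probability tensor with first-index flattening $R\in\mathbb R^{n\times n^{m-1}}$, let $v\in\mathbb R^n$ be a stochastic vector, and let $\alpha\in[0,1)$ satisfy $\alpha<\frac{1}{m-1}$. Define $f(\mathbf{x})=\alpha R(\mathbf{x}\otimes\cdots\otimes\mathbf{x})+(1-\alpha)v-\mathbf{x}$ (with $m-1$ Kronecker factors $\mathbf{x}$) and $$J_f(\mathbf{x})=\alpha R\Big(I\otimes\mathbf{x}\otimes\cdots\otimes\mathbf{x}+\mathbf{x}\otimes I\otimes\mathbf{x}\otimes\cdots\otimes\mathbf{x}+\cdots+\mathbf{x}\otimes\cdots\otimes\mathbf{x}\otimes I\Big)-I.$$ Then the Newton iteration $\mathbf{x}_{k+1}=\mathbf{x}_k-J_f(\mathbf{x}_k)^{-1}f(\mathbf{x}_k)$, $k=0,1,2,\dots$, started from $\mathbf{x}_0=0$, converges quadratically to the unique solution $\mathbf{x}$ of the multilinear PageRank equation $\mathbf{x}=\alpha R(\mathbf{x}\otimes\cdots\otimes\mathbf{x})+(1-\alpha)v$.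
   Context: A transition probability tensor $\mathcal P\in\mathbb R^{[m,n]}$ (order $m$, each dimension $n$) satisfies $p_{i_1\dots i_m}\ge0$ and $\sum_{i_1=1}^n p_{i_1 i_2\dots i_m}=1$ for all $(i_2,\dots,i_m)$. A vector is stochastic if its entries are non-negative and sum to one. The flattening $R$ along the first index is the $n\times n^{m-1}$ matrix with $\big(R(y^{(2)}\otimes\cdots\otimes y^{(m)})\big)_i=\sum_{i_2,\dots,i_m=1}^n p_{i i_2\dots i_m}y^{(2)}_{i_2}\cdots y^{(m)}_{i_m}$ for all $y^{(j)}\in\mathbb R^n$. $I$ is the $n\times n$ identity, $\otimes$ the Kronecker product; in the Jacobian, each of the $m-1$ summands is a Kronecker product of $m-1$ factors with $I$ in exactly one position and $\mathbf{x}$ (as an $n\times1$ matrix) in the other $m-2$ positions. Quadratic convergence means there is a constant $C>0$ with $\|\mathbf{x}_{k+1}-\mathbf{x}\|\le C\|\mathbf{x}_k-\mathbf{x}\|^2$ for all sufficiently large $k$. *)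

theory Defs
  imports "HOL-Analysis.Analysis"
begin

text \<open>An order-m tensor with every dimension of size CARD('n) is a function on index
lists of length m; P (i1 # i2 # ... # im) = p_{i1 i2 ... im}.\<close>

definition transition_tensor :: "nat \<Rightarrow> ('n::finite list \<Rightarrow> real) \<Rightarrow> bool" where
  "transition_tensor m P \<longleftrightarrow>
     (\<forall>is. length is = m \<longrightarrow> P is \<ge> 0) \<and>
     (\<forall>js. length js = m - 1 \<longrightarrow> (\<Sum>i\<in>UNIV. P (i # js)) = 1)"

definition stochastic :: "real ^ 'n::finite \<Rightarrow> bool" where
  "stochastic v \<longleftrightarrow> (\<forall>i. v $ i \<ge> 0) \<and> (\<Sum>i\<in>UNIV. v $ i) = 1"

text \<open>Flattening R along the first index, applied to y(2) \<otimes> ... \<otimes> y(m),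
  where ys = [y(2), ..., y(m)] (a list of m-1 vectors).\<close>
definition flat_apply :: "nat \<Rightarrow> ('n::finite list \<Rightarrow> real) \<Rightarrow> (real ^ 'n) list \<Rightarrow> real ^ 'n" where
  "flat_apply m P ys = (\<chi> i. \<Sum>js\<in>{js. length js = m - 1}.
        P (i # js) * (\<Prod>k<m - 1. (ys ! k) $ (js ! k)))"

definition mlpr_f :: "nat \<Rightarrow> ('n::finite list \<Rightarrow> real) \<Rightarrow> real \<Rightarrow> real ^ 'n \<Rightarrow> real ^ 'n \<Rightarrow> real ^ 'n" where
  "mlpr_f m P \<alpha> v x = \<alpha> *\<^sub>R flat_apply m P (replicate (m - 1) x) + (1 - \<alpha>) *\<^sub>R v - x"

text \<open>The matrix R (x \<otimes> .. \<otimes> I \<otimes> .. \<otimes> x) with I in position j (0-based among the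
  m-1 factors): its column l is R (x \<otimes> .. \<otimes> e_l \<otimes> .. \<otimes> x).\<close>
definition flat_I_at :: "nat \<Rightarrow> ('n::finite list \<Rightarrow> real) \<Rightarrow> nat \<Rightarrow> real ^ 'n \<Rightarrow> real ^ 'n ^ 'n" where
  "flat_I_at m P j x = (\<chi> i l. flat_apply m P ((replicate (m - 1) x)[j := axis l 1]) $ i)"

definition mlpr_J :: "nat \<Rightarrow> ('n::finite list \<Rightarrow> real) \<Rightarrow> real \<Rightarrow> real ^ 'n \<Rightarrow> real ^ 'n ^ 'n" where
  "mlpr_J m P \<alpha> x = \<alpha> *\<^sub>R (\<Sum>j<m - 1. flat_I_at m P j x) - mat 1"

end

theory Submission
  imports Defs
begin


lemma prod_convex_aux:
  fixes a b :: "nat \<Rightarrow> real"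
  assumes "finite S" "\<And>k. k \<in> S \<Longrightarrow> 0 \<le> a k" "\<And>k. k \<in> S \<Longrightarrow> a k \<le> b k"
  shows "(\<Prod>k\<in>S. b k) - (\<Prod>k\<in>S. a k) - (\<Sum>j\<in>S. (b j - a j) * (\<Prod>k\<in>S-{j}. a k)) \<ge> 0"
  using assms
proof (induction S rule: finite_induct)
  case empty
  then show ?case by simp
next
  case (insert i S)
  have pm: "(\<Prod>k\<in>S. a k) \<le> (\<Prod>k\<in>S. b k)"
    by (rule prod_mono) (use insert in auto)
  have s1: "(\<Sum>j\<in>insert i S. (b j - a j) * (\<Prod>k\<in>insert i S-{j}. a k))
      = (b i - a i) * (\<Prod>k\<in>S. a k) + a i * (\<Sum>j\<in>S. (b j - a j) * (\<Prod>k\<in>S-{j}. a k))"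
  proof -
    have "(\<Sum>j\<in>S. (b j - a j) * (\<Prod>k\<in>insert i S-{j}. a k)) = (\<Sum>j\<in>S. a i * ((b j - a j) * (\<Prod>k\<in>S-{j}. a k)))"
    proof (rule sum.cong)
      fix j assume "j \<in> S"
      then have "insert i S - {j} = insert i (S - {j})" using insert by auto
      then show "(b j - a j) * (\<Prod>k\<in>insert i S-{j}. a k) = a i * ((b j - a j) * (\<Prod>k\<in>S-{j}. a k))"
        using insert by simp
    qed simp
    moreover have "insert i S - {i} = S" using insert by auto
    ultimately show ?thesis using insert by (simp add: sum_distrib_left)
  qed
  have IH: "(\<Prod>k\<in>S. b k) - (\<Prod>k\<in>S. a k) - (\<Sum>j\<in>S. (b j - a j) * (\<Prod>k\<in>S-{j}. a k)) \<ge> 0"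
    using insert by auto
  have ai: "0 \<le> a i" "a i \<le> b i" using insert by auto
  have "(\<Prod>k\<in>insert i S. b k) - (\<Prod>k\<in>insert i S. a k) - (\<Sum>j\<in>insert i S. (b j - a j) * (\<Prod>k\<in>insert i S-{j}. a k))
     = (b i - a i) * ((\<Prod>k\<in>S. b k) - (\<Prod>k\<in>S. a k)) + a i * ((\<Prod>k\<in>S. b k) - (\<Prod>k\<in>S. a k) - (\<Sum>j\<in>S. (b j - a j) * (\<Prod>k\<in>S-{j}. a k)))"
    using insert s1 by (simp add: algebra_simps)
  also have "\<dots> \<ge> 0" using pm IH ai by (intro add_nonneg_nonneg mult_nonneg_nonneg) auto
  finally show ?case .
qed

lemma sum_lists_prod:
  fixes F :: "nat \<Rightarrow> 'n::finite \<Rightarrow> real"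
  shows "(\<Sum>js\<in>{js::'n list. length js = L}. \<Prod>k<L. F k (js ! k)) = (\<Prod>k<L. \<Sum>i\<in>UNIV. F k i)"
proof (induction L arbitrary: F)
  case 0
  then show ?case by simp
next
  case (Suc L)
  have eq: "{js::'n list. length js = Suc L} = (\<lambda>(a, js). a # js) ` (UNIV \<times> {js. length js = L})"
    by (auto simp: length_Suc_conv image_iff)
  have inj: "inj_on (\<lambda>(a, js). a # js) (UNIV \<times> {js::'n list. length js = L})"
    by (auto simp: inj_on_def)
  have fin: "finite {js::'n list. length js = L}"
    using finite_lists_length_eq[of "UNIV::'n set" L] by simp
  have "(\<Sum>js\<in>{js::'n list. length js = Suc L}. \<Prod>k<Suc L. F k (js ! k))
      = (\<Sum>(a, js)\<in>UNIV \<times> {js::'n list. length js = L}. \<Prod>k<Suc L. F k ((a # js) ! k))"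
    unfolding eq by (subst sum.reindex[OF inj]) (simp add: case_prod_unfold)
  also have "\<dots> = (\<Sum>(a, js)\<in>UNIV \<times> {js::'n list. length js = L}. F 0 a * (\<Prod>k<L. F (Suc k) (js ! k)))"
    by (simp only: prod.lessThan_Suc_shift nth_Cons_0 nth_Cons_Suc)
  also have "\<dots> = (\<Sum>a\<in>UNIV. \<Sum>js\<in>{js::'n list. length js = L}. F 0 a * (\<Prod>k<L. F (Suc k) (js ! k)))"
    by (rule sum.cartesian_product[symmetric])
  also have "\<dots> = (\<Sum>a\<in>UNIV. F 0 a) * (\<Prod>k<L. \<Sum>i\<in>UNIV. F (Suc k) i)"
    by (simp add: sum_distrib_left[symmetric] sum_distrib_right Suc.IH[of "\<lambda>k. F (Suc k)"])
  also have "\<dots> = (\<Prod>k<Suc L. \<Sum>i\<in>UNIV. F k i)"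
    by (simp only: prod.lessThan_Suc_shift)
  finally show ?case .
qed

lemma prod_replicate_upd:
  assumes "j < L"
  shows "(\<Prod>k<L. H k ((replicate L x)[j := y] ! k)) = H j y * (\<Prod>k\<in>{..<L}-{j}. H k x)"
proof -
  have "(\<Prod>k<L. H k ((replicate L x)[j := y] ! k)) = H j ((replicate L x)[j := y] ! j) * (\<Prod>k\<in>{..<L}-{j}. H k ((replicate L x)[j := y] ! k))"
    using assms by (subst prod.remove[of _ j]) auto
  also have "\<dots> = H j y * (\<Prod>k\<in>{..<L}-{j}. H k x)"
    using assms by (auto intro!: prod.cong simp: nth_list_update)
  finally show ?thesis .
qed



definition Dm :: "nat \<Rightarrow> ('n::finite list \<Rightarrow> real) \<Rightarrow> real ^ 'n \<Rightarrow> real ^ 'n \<Rightarrow> real ^ 'n" where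
  "Dm m P x d = (\<Sum>j<m - 1. flat_apply m P ((replicate (m - 1) x)[j := d]))"

lemma flat_rep_coord:
  "flat_apply m P (replicate (m - 1) x) $ i = (\<Sum>js\<in>{js. length js = m - 1}. P (i # js) * (\<Prod>k<m - 1. x $ (js ! k)))"
  unfolding flat_apply_def by (auto intro!: sum.cong prod.cong)

lemma flat_upd_coord:
  assumes "j < m - 1"
  shows "flat_apply m P ((replicate (m - 1) x)[j := d]) $ i =
    (\<Sum>js\<in>{js. length js = m - 1}. P (i # js) * (d $ (js ! j) * (\<Prod>k\<in>{..<m - 1}-{j}. x $ (js ! k))))"
  unfolding flat_apply_def vec_lambda_beta
proof (rule sum.cong[OF refl])
  fix js :: "'a list"
  show "P (i # js) * (\<Prod>k<m - 1. (replicate (m - 1) x)[j := d] ! k $ (js ! k)) =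
         P (i # js) * (d $ (js ! j) * (\<Prod>k\<in>{..<m - 1} - {j}. x $ (js ! k)))"
    using prod_replicate_upd[OF assms, where H="\<lambda>k z. z $ (js ! k)" and x=x and y=d] by simp
qed

lemma Dm_coord:
  "Dm m P x d $ i = (\<Sum>js\<in>{js. length js = m - 1}. P (i # js) *
      (\<Sum>j<m - 1. d $ (js ! j) * (\<Prod>k\<in>{..<m - 1}-{j}. x $ (js ! k))))"
proof -
  have "Dm m P x d $ i = (\<Sum>j<m - 1. \<Sum>js\<in>{js. length js = m - 1}. P (i # js) * (d $ (js ! j) * (\<Prod>k\<in>{..<m - 1}-{j}. x $ (js ! k))))"
    unfolding Dm_def sum_component by (rule sum.cong[OF refl], rule flat_upd_coord, simp)
  then show ?thesis by (simp only: sum_distrib_left) (rule trans, rule sum.swap, rule refl)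
qed

lemma flatI_mult:
  "(\<Sum>j<m - 1. flat_I_at m P j x) *v d = Dm m P x d"
  proof (rule vec_eq_iff[THEN iffD2, rule_format])
    fix i
    have "((\<Sum>j<m - 1. flat_I_at m P j x) *v d) $ i
        = (\<Sum>l\<in>UNIV. (\<Sum>j<m - 1. \<Sum>js\<in>{js. length js = m - 1}. P (i # js) * ((axis l 1 :: real^'a) $ (js ! j) * (\<Prod>k\<in>{..<m - 1}-{j}. x $ (js ! k)))) * d $ l)"
      unfolding matrix_vector_mult_def flat_I_at_def sum_component vec_lambda_beta
      by (intro sum.cong refl arg_cong2[where f="(*)"], rule flat_upd_coord) simp
    also have "\<dots> = (\<Sum>l\<in>UNIV. \<Sum>j<m - 1. \<Sum>js\<in>{js. length js = m - 1}. P (i # js) * ((axis l 1 :: real^'a) $ (js ! j) * (\<Prod>k\<in>{..<m - 1}-{j}. x $ (js ! k))) * d $ l)"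
      by (simp only: sum_distrib_right)
    also have "\<dots> = (\<Sum>j<m - 1. \<Sum>l\<in>UNIV. \<Sum>js\<in>{js. length js = m - 1}. P (i # js) * ((axis l 1 :: real^'a) $ (js ! j) * (\<Prod>k\<in>{..<m - 1}-{j}. x $ (js ! k))) * d $ l)"
      by (rule sum.swap)
    also have "\<dots> = (\<Sum>j<m - 1. \<Sum>js\<in>{js. length js = m - 1}. \<Sum>l\<in>UNIV. P (i # js) * ((axis l 1 :: real^'a) $ (js ! j) * (\<Prod>k\<in>{..<m - 1}-{j}. x $ (js ! k))) * d $ l)"
      by (rule sum.cong[OF refl], rule sum.swap)
    also have "\<dots> = (\<Sum>j<m - 1. \<Sum>js\<in>{js. length js = m - 1}. P (i # js) * (d $ (js ! j) * (\<Prod>k\<in>{..<m - 1}-{j}. x $ (js ! k))))"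
    proof (intro sum.cong refl)
      fix j js
      have "(\<Sum>l\<in>UNIV. P (i # js) * ((axis l 1 :: real^'a) $ (js ! j) * (\<Prod>k\<in>{..<m - 1}-{j}. x $ (js ! k))) * d $ l)
          = (\<Sum>l\<in>UNIV. if l = js ! j then P (i # js) * (\<Prod>k\<in>{..<m - 1}-{j}. x $ (js ! k)) * d $ l else 0)"
        by (rule sum.cong) (auto simp: axis_def)
      also have "\<dots> = P (i # js) * (d $ (js ! j) * (\<Prod>k\<in>{..<m - 1}-{j}. x $ (js ! k)))"
        by (simp add: sum.delta')
      finally show "(\<Sum>l\<in>UNIV. P (i # js) * ((axis l 1 :: real^'a) $ (js ! j) * (\<Prod>k\<in>{..<m - 1}-{j}. x $ (js ! k))) * d $ l)
          = P (i # js) * (d $ (js ! j) * (\<Prod>k\<in>{..<m - 1}-{j}. x $ (js ! k)))" .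
    qed
    also have "\<dots> = Dm m P x d $ i"
      unfolding Dm_coord by (simp only: sum_distrib_left) (rule sum.swap)
    finally show "((\<Sum>j<m - 1. flat_I_at m P j x) *v d) $ i = Dm m P x d $ i" .
  qed

lemma J_mult:
  "mlpr_J m P \<alpha> x *v d = \<alpha> *\<^sub>R Dm m P x d - d"
  using flatI_mult[of m P x d]
    unfolding mlpr_J_def by (simp add: matrix_vector_mult_diff_rdistrib scaleR_matrix_vector_assoc[symmetric])



lemma sum_flat:
  assumes tt: "transition_tensor m P" and len: "length ys = m - 1"
  shows "(\<Sum>i\<in>UNIV. flat_apply m P ys $ i) = (\<Prod>k<m - 1. \<Sum>i\<in>UNIV. ys ! k $ i)"
proof -
  have "(\<Sum>i\<in>UNIV. flat_apply m P ys $ i)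
      = (\<Sum>i\<in>UNIV. \<Sum>js\<in>{js. length js = m - 1}. P (i # js) * (\<Prod>k<m - 1. (ys ! k) $ (js ! k)))"
    unfolding flat_apply_def by simp
  also have "\<dots> = (\<Sum>js\<in>{js. length js = m - 1}. \<Sum>i\<in>UNIV. P (i # js) * (\<Prod>k<m - 1. (ys ! k) $ (js ! k)))"
    by (rule sum.swap)
  also have "\<dots> = (\<Sum>js\<in>{js. length js = m - 1}. (\<Prod>k<m - 1. (ys ! k) $ (js ! k)))"
    using tt unfolding transition_tensor_def by (auto simp: sum_distrib_right[symmetric] intro!: sum.cong)
  also have "\<dots> = (\<Prod>k<m - 1. \<Sum>i\<in>UNIV. ys ! k $ i)"
    by (rule sum_lists_prod)
  finally show ?thesis .
qed

lemma sum_flat_rep: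
  assumes tt: "transition_tensor m P"
  shows "(\<Sum>i\<in>UNIV. flat_apply m P (replicate (m - 1) x) $ i) = (\<Sum>i\<in>UNIV. x $ i) ^ (m - 1)"
  using sum_flat[OF tt, of "replicate (m - 1) x"] by simp

lemma sum_Dm:
  assumes tt: "transition_tensor m P"
  shows "(\<Sum>i\<in>UNIV. Dm m P x d $ i) = real (m - 1) * (\<Sum>i\<in>UNIV. x $ i) ^ (m - 2) * (\<Sum>i\<in>UNIV. d $ i)"
proof -
  have "(\<Sum>i\<in>UNIV. Dm m P x d $ i) = (\<Sum>j<m - 1. \<Sum>i\<in>UNIV. flat_apply m P ((replicate (m - 1) x)[j := d]) $ i)"
    unfolding Dm_def sum_component by (rule sum.swap)
  also have "\<dots> = (\<Sum>j<m - 1. (\<Sum>i\<in>UNIV. d $ i) * (\<Sum>i\<in>UNIV. x $ i) ^ (m - 2))"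
  proof (rule sum.cong[OF refl])
    fix j assume j: "j \<in> {..<m - 1}"
    have "(\<Sum>i\<in>UNIV. flat_apply m P ((replicate (m - 1) x)[j := d]) $ i)
        = (\<Prod>k<m - 1. \<Sum>i\<in>UNIV. (replicate (m - 1) x)[j := d] ! k $ i)"
      by (rule sum_flat[OF tt]) simp
    also have "\<dots> = (\<Sum>i\<in>UNIV. d $ i) * (\<Prod>k\<in>{..<m - 1}-{j}. \<Sum>i\<in>UNIV. x $ i)"
      using prod_replicate_upd[of j "m - 1" "\<lambda>k z. \<Sum>i\<in>UNIV. z $ i" x d] j by simp
    also have "\<dots> = (\<Sum>i\<in>UNIV. d $ i) * (\<Sum>i\<in>UNIV. x $ i) ^ (m - 2)"
      using j by (simp add: numeral_2_eq_2)
    finally show "(\<Sum>i\<in>UNIV. flat_apply m P ((replicate (m - 1) x)[j := d]) $ i) = (\<Sum>i\<in>UNIV. d $ i) * (\<Sum>i\<in>UNIV. x $ i) ^ (m - 2)" .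
  qed
  also have "\<dots> = real (m - 1) * (\<Sum>i\<in>UNIV. x $ i) ^ (m - 2) * (\<Sum>i\<in>UNIV. d $ i)"
    by simp
  finally show ?thesis .
qed

lemma tt_nonneg:
  assumes tt: "transition_tensor m P" and m: "m \<ge> 2" and "length js = m - 1"
  shows "0 \<le> P (i # js)"
  using tt assms unfolding transition_tensor_def by auto

lemma flat_nonneg:
  assumes tt: "transition_tensor m P" and m: "m \<ge> 2" and len: "length ys = m - 1"
    and nn: "\<And>y i. y \<in> set ys \<Longrightarrow> 0 \<le> y $ i"
  shows "0 \<le> flat_apply m P ys $ i"
  unfolding flat_apply_def vec_lambda_beta
  using len by (intro sum_nonneg mult_nonneg_nonneg prod_nonneg tt_nonneg[OF tt m]) (auto intro!: nn)

lemma Dm_nonneg: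
  assumes tt: "transition_tensor m P" and m: "m \<ge> 2"
    and x: "\<And>i. 0 \<le> x $ i" and d: "\<And>i. 0 \<le> d $ i"
  shows "0 \<le> Dm m P x d $ i"
  unfolding Dm_coord
  by (intro sum_nonneg mult_nonneg_nonneg prod_nonneg tt_nonneg[OF tt m]) (auto intro!: x d)

lemma convex_flat:
  assumes tt: "transition_tensor m P" and m: "m \<ge> 2"
    and x: "\<And>i. 0 \<le> x $ i" and xy: "\<And>i. x $ i \<le> y $ i"
  shows "0 \<le> flat_apply m P (replicate (m - 1) y) $ i - flat_apply m P (replicate (m - 1) x) $ i - Dm m P x (y - x) $ i"
proof -
  have "flat_apply m P (replicate (m - 1) y) $ i - flat_apply m P (replicate (m - 1) x) $ i - Dm m P x (y - x) $ i
     = (\<Sum>js\<in>{js. length js = m - 1}. P (i # js) * ((\<Prod>k<m - 1. y $ (js ! k)) - (\<Prod>k<m - 1. x $ (js ! k))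
         - (\<Sum>j<m - 1. (y $ (js ! j) - x $ (js ! j)) * (\<Prod>k\<in>{..<m - 1}-{j}. x $ (js ! k)))))"
    unfolding flat_rep_coord Dm_coord by (simp add: sum_subtractf[symmetric] right_diff_distrib)
  also have "\<dots> \<ge> 0"
  proof (intro sum_nonneg mult_nonneg_nonneg tt_nonneg[OF tt m])
    fix js :: "'a list"
    show "0 \<le> (\<Prod>k<m - 1. y $ (js ! k)) - (\<Prod>k<m - 1. x $ (js ! k))
         - (\<Sum>j<m - 1. (y $ (js ! j) - x $ (js ! j)) * (\<Prod>k\<in>{..<m - 1}-{j}. x $ (js ! k)))"
      using prod_convex_aux[of "{..<m - 1}" "\<lambda>k. x $ (js ! k)" "\<lambda>k. y $ (js ! k)"] x xy by simp
  qed simp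
  finally show ?thesis .
qed

lemma flat_I_sum_entry:
  "(\<Sum>j<m - 1. flat_I_at m P j x) $ i $ l = Dm m P x (axis l 1) $ i"
  unfolding Dm_def flat_I_at_def sum_component by simp

lemma sum_axis: "(\<Sum>i\<in>UNIV. (axis l 1 :: real ^ 'n::finite) $ i) = 1"
  unfolding axis_def by (simp add: sum.delta')



lemma mmatrix_nonneg:
  fixes B :: "real^'n::finite^'n"
  assumes Bnn: "\<And>i l. 0 \<le> B$i$l" and col: "\<And>l. (\<Sum>i\<in>UNIV. B$i$l) \<le> c" and c: "c < 1"
    and eq: "z - B *v z = w" and w: "\<And>i. 0 \<le> w$i"
  shows "0 \<le> z$i"
proof (rule ccontr)
  assume neg: "\<not> 0 \<le> z$i"
  define N where "N = {i. z$i < 0}"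
  have iN: "i \<in> N" using neg by (simp add: N_def)
  have zi: "\<And>i. z$i = w$i + (\<Sum>l\<in>UNIV. B$i$l * z$l)"
  proof -
    fix i
    have "z = w + B *v z" using eq by (metis add.commute diff_add_cancel)
    then have "z$i = (w + B *v z)$i" by simp
    then show "z$i = w$i + (\<Sum>l\<in>UNIV. B$i$l * z$l)" by (simp add: matrix_vector_mult_def)
  qed
  define S where "S = (\<Sum>i\<in>N. z$i)"
  have Sneg: "S < 0"
  proof -
    have "S = z$i + (\<Sum>j\<in>N-{i}. z$j)" unfolding S_def using iN by (simp add: sum.remove)
    moreover have "(\<Sum>j\<in>N-{i}. z$j) \<le> 0" by (rule sum_nonpos) (auto simp: N_def)
    ultimately show ?thesis using neg by linarith
  qed
  have "S = (\<Sum>i\<in>N. w$i) + (\<Sum>i\<in>N. \<Sum>l\<in>UNIV. B$i$l * z$l)"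
    unfolding S_def by (subst sum.distrib[symmetric]) (rule sum.cong[OF refl], rule zi)
  also have "\<dots> \<ge> (\<Sum>i\<in>N. \<Sum>l\<in>N. B$i$l * z$l)"
  proof -
    have "(\<Sum>i\<in>N. \<Sum>l\<in>N. B$i$l * z$l) \<le> (\<Sum>i\<in>N. \<Sum>l\<in>UNIV. B$i$l * z$l)"
      by (intro sum_mono sum_mono2) (auto simp: N_def intro!: mult_nonneg_nonneg Bnn)
    moreover have "0 \<le> (\<Sum>i\<in>N. w$i)" by (intro sum_nonneg w)
    ultimately show ?thesis by linarith
  qed
  finally have S1: "(\<Sum>i\<in>N. \<Sum>l\<in>N. B$i$l * z$l) \<le> S" .
  have "(\<Sum>i\<in>N. \<Sum>l\<in>N. B$i$l * z$l) = (\<Sum>l\<in>N. z$l * (\<Sum>i\<in>N. B$i$l))"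
    by (subst sum.swap) (simp add: sum_distrib_left mult.commute)
  also have "\<dots> \<ge> (\<Sum>l\<in>N. z$l * c)"
  proof (rule sum_mono)
    fix l assume l: "l \<in> N"
    have "(\<Sum>i\<in>N. B$i$l) \<le> (\<Sum>i\<in>UNIV. B$i$l)"
      by (rule sum_mono2) (auto intro: Bnn)
    also have "\<dots> \<le> c" by (rule col)
    finally show "z$l * c \<le> z$l * (\<Sum>i\<in>N. B$i$l)"
      using l by (intro mult_left_mono_neg) (auto simp: N_def)
  qed
  finally have "(\<Sum>l\<in>N. z$l * c) \<le> S" using S1 by linarith
  moreover have "(\<Sum>l\<in>N. z$l * c) = c * S" by (simp add: S_def sum_distrib_left mult.commute)
  ultimately have "c * S \<le> S" by simp
  then have "(1 - c) * S \<ge> 0" by (simp add: algebra_simps)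
  moreover have "(1 - c) * S < 0" using c Sneg by (simp add: mult_pos_neg)
  ultimately show False by linarith
qed

lemma mmatrix_invertible:
  fixes B :: "real^'n::finite^'n"
  assumes Bnn: "\<And>i l. 0 \<le> B$i$l" and col: "\<And>l. (\<Sum>i\<in>UNIV. B$i$l) \<le> c" and c: "c < 1"
  shows "invertible (B - mat 1)"
proof -
  have "inj ((*v) (B - mat 1))"
  proof (rule injI)
    fix z z' :: "real^'n"
    assume "(B - mat 1) *v z = (B - mat 1) *v z'"
    then have h: "B *v z - z = B *v z' - z'" by (simp add: matrix_vector_mult_diff_rdistrib)
    have e: "(z - z') - B *v (z - z') = 0"
      unfolding matrix_vector_mult_diff_distrib using h by (simp add: algebra_simps)
    have e': "(z' - z) - B *v (z' - z) = 0"
      unfolding matrix_vector_mult_diff_distrib using h by (simp add: algebra_simps)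
    have "0 \<le> (z - z')$i" "0 \<le> (z' - z)$i" for i
      by (rule mmatrix_nonneg[OF Bnn col c e], simp, rule mmatrix_nonneg[OF Bnn col c e'], simp)
    then show "z = z'" by (auto simp: vec_eq_iff intro: antisym)
  qed
  then show ?thesis
    using matrix_left_invertible_injective invertible_left_inverse by blast
qed

lemma matrix_inv_right':
  fixes A :: "real^'n::finite^'n"
  assumes "invertible A"
  shows "A *v (matrix_inv A *v y) = y"
proof -
  have "A ** matrix_inv A = mat 1"
    using assms unfolding invertible_def matrix_inv_def by (rule someI_ex[THEN conjunct1])
  then show ?thesis by (metis matrix_vector_mul_assoc matrix_vector_mul_lid)
qed



lemma bern_le:
  fixes s :: real assumes "0 \<le> s" "s \<le> 1"
  shows "1 - s ^ j \<le> real j * (1 - s)"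
proof -
  have "(\<Sum>i<j. s^i) \<le> (\<Sum>i<j. 1)" by (intro sum_mono) (use assms in \<open>auto intro: power_le_one\<close>)
  then have "(1 - s) * (\<Sum>i<j. s^i) \<le> (1 - s) * real j" using assms by (intro mult_left_mono) auto
  then show ?thesis by (simp add: one_diff_power_eq mult.commute)
qed

lemma Q_bounds:
  fixes s :: real assumes s: "0 \<le> s" "s \<le> 1" and N: "N \<ge> 1"
  defines "Q \<equiv> 1 - s ^ N - real N * s ^ (N - 1) * (1 - s)"
  shows "0 \<le> Q" "Q \<le> real N * (1 - s) * (1 - s ^ (N - 1))" "Q \<le> real N ^ 2 * (1 - s) ^ 2"
proof -
  have Qe: "Q = (1 - s) * (\<Sum>i<N. s ^ i - s ^ (N - 1))"
    unfolding Q_def by (simp add: one_diff_power_eq sum_subtractf algebra_simps)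
  have t0: "0 \<le> s ^ i - s ^ (N - 1)" if "i < N" for i
    using that s by (simp add: power_decreasing)
  have t1: "s ^ i - s ^ (N - 1) \<le> 1 - s ^ (N - 1)" for i
    using s by (simp add: power_le_one)
  have sum0: "0 \<le> (\<Sum>i<N. s ^ i - s ^ (N - 1))" by (intro sum_nonneg t0) auto
  show "0 \<le> Q" unfolding Qe using s sum0 by simp
  have sum1: "(\<Sum>i<N. s ^ i - s ^ (N - 1)) \<le> real N * (1 - s ^ (N - 1))"
    using sum_mono[of "{..<N}" "\<lambda>i. s ^ i - s ^ (N - 1)" "\<lambda>i. 1 - s ^ (N - 1)"] t1 by simp
  show Q2: "Q \<le> real N * (1 - s) * (1 - s ^ (N - 1))"
    unfolding Qe using mult_left_mono[OF sum1, of "1 - s"] s by (simp add: algebra_simps)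
  have b: "1 - s ^ (N - 1) \<le> real N * (1 - s)"
    using bern_le[OF s, of "N - 1"] s N by (smt (verit) of_nat_diff of_nat_1 mult_right_mono)
  have "real N * (1 - s) * (1 - s ^ (N - 1)) \<le> real N * (1 - s) * (real N * (1 - s))"
    using b s by (intro mult_left_mono) auto
  then show "Q \<le> real N ^ 2 * (1 - s) ^ 2" using Q2 by (simp add: power2_eq_square algebra_simps)
qed

lemma scalar_newton:
  fixes s \<Delta> \<alpha> :: real
  assumes s: "0 \<le> s" "s \<le> 1" and N: "N \<ge> 1" and a: "0 \<le> \<alpha>" and c: "\<alpha> * real N < 1"
    and eq: "\<Delta> * (1 - \<alpha> * real N * s ^ (N - 1)) = \<alpha> * s ^ N + (1 - \<alpha>) - s"
  shows "s + \<Delta> \<le> 1" "1 - (s + \<Delta>) \<le> \<alpha> * real N * (1 - s)"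
    "1 - (s + \<Delta>) \<le> \<alpha> * real N ^ 2 / (1 - \<alpha> * real N) * (1 - s) ^ 2"
proof -
  define t where "t = s ^ (N - 1)"
  have t: "0 \<le> t" "t \<le> 1" unfolding t_def using s by (auto intro: power_le_one)
  define Q where "Q = 1 - s ^ N - real N * s ^ (N - 1) * (1 - s)"
  note QB = Q_bounds[OF s N, folded Q_def]
  define den where "den = 1 - \<alpha> * real N * t"
  have "\<alpha> * real N * t \<le> \<alpha> * real N" using t a by (simp add: mult_left_le)
  then have den_ge: "1 - \<alpha> * real N \<le> den" unfolding den_def by simp
  have den_pos: "den > 0" using den_ge c by simp
  have key: "(1 - (s + \<Delta>)) * den = \<alpha> * Q"
    using eq unfolding den_def Q_def t_def by (simp add: algebra_simps)
  have e: "1 - (s + \<Delta>) = \<alpha> * Q / den" using key den_pos by (simp add: field_simps)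
  have "0 \<le> \<alpha> * Q / den" using QB(1) a den_pos by simp
  then show "s + \<Delta> \<le> 1" using e by linarith
  have "\<alpha> * Q \<le> \<alpha> * (real N * (1 - s) * (1 - t))" using QB(2) a unfolding t_def by (simp add: mult_left_mono)
  also have "\<dots> \<le> \<alpha> * real N * (1 - s) * den"
  proof -
    have "1 - t \<le> den" unfolding den_def using t c a mult_right_mono[of "\<alpha> * real N" 1 t] by simp
    then show ?thesis using a s by (simp add: mult.assoc mult_left_mono)
  qed
  finally show "1 - (s + \<Delta>) \<le> \<alpha> * real N * (1 - s)" using e den_pos by (simp add: divide_le_eq)
  have "\<alpha> * Q / den \<le> \<alpha> * (real N ^ 2 * (1 - s) ^ 2) / den"
    using QB(3) a den_pos by (intro divide_right_mono mult_left_mono) auto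
  also have "\<dots> \<le> \<alpha> * (real N ^ 2 * (1 - s) ^ 2) / (1 - \<alpha> * real N)"
    using den_ge c a by (intro divide_left_mono mult_nonneg_nonneg) auto
  finally show "1 - (s + \<Delta>) \<le> \<alpha> * real N ^ 2 / (1 - \<alpha> * real N) * (1 - s) ^ 2" using e by simp
qed



definition sm :: "real ^ 'n::finite \<Rightarrow> real" where "sm x = (\<Sum>i\<in>UNIV. x $ i)"

lemma sm_diff: "sm (x - y) = sm x - sm y" unfolding sm_def by (simp add: sum_subtractf)
lemma sm_add: "sm (x + y) = sm x + sm y" unfolding sm_def by (simp add: sum.distrib)
lemma sm_scale: "sm (a *\<^sub>R x) = a * sm x" unfolding sm_def by (simp add: sum_distrib_left)

lemma flip_eq:
  fixes A :: "real^'n::finite^'n"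
  assumes "(A - mat 1) *v (x - x') = w"
  shows "(x' - x) - A *v (x' - x) = w"
proof -
  have "(A - mat 1) *v (x - x') = (A *v x - A *v x') - (x - x')"
    by (simp only: matrix_vector_mult_diff_rdistrib matrix_vector_mult_diff_distrib matrix_vector_mul_lid) (simp add: algebra_simps)
  moreover have "(x' - x) - A *v (x' - x) = (x' - x) - (A *v x' - A *v x)"
    by (simp only: matrix_vector_mult_diff_distrib)
  ultimately show ?thesis using assms by (simp add: algebra_simps)
qed

locale setting =
  fixes m :: nat and P :: "'n::finite list \<Rightarrow> real" and v :: "real ^ 'n" and \<alpha> :: real
  assumes m: "m \<ge> 2" and tt: "transition_tensor m P" and st: "stochastic v"
    and a0: "0 \<le> \<alpha>" and a1: "\<alpha> < 1" and c1: "\<alpha> * real (m - 1) < 1"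
begin

abbreviation "L \<equiv> m - 1"
abbreviation "M x \<equiv> (\<Sum>j<m - 1. flat_I_at m P j x)"
abbreviation "G x \<equiv> \<alpha> *\<^sub>R flat_apply m P (replicate (m - 1) x) + (1 - \<alpha>) *\<^sub>R v"
abbreviation "f \<equiv> mlpr_f m P \<alpha> v"

lemma f_eq: "f x = G x - x" unfolding mlpr_f_def by simp

lemma J_eq: "mlpr_J m P \<alpha> x = \<alpha> *\<^sub>R M x - mat 1" unfolding mlpr_J_def by simp

lemma M_mult: "M x *v d = Dm m P x d" by (rule flatI_mult)

lemma sm_v: "sm v = 1" using st unfolding stochastic_def sm_def by simp

lemma sm_f: "sm (f x) = \<alpha> * sm x ^ (m - 1) + (1 - \<alpha>) - sm x"
  unfolding f_eq sm_diff sm_add sm_scale sm_v using sum_flat_rep[OF tt, of x] by (simp add: sm_def)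

lemma sm_M: "sm (M x *v d) = real (m - 1) * sm x ^ (m - 2) * sm d"
  unfolding M_mult sm_def by (rule sum_Dm[OF tt])

lemma le_sm: assumes "\<And>i. 0 \<le> x $ i" shows "x $ i \<le> sm x"
  unfolding sm_def using assms by (intro member_le_sum) auto

lemma Mentry: "(\<alpha> *\<^sub>R M x) $ i $ l = \<alpha> * Dm m P x (axis l 1) $ i"
  unfolding vector_scaleR_component flat_I_sum_entry by simp

lemma B_props:
  assumes x0: "\<And>i. 0 \<le> x $ i" and xs: "sm x \<le> 1"
  shows "\<And>i l. 0 \<le> (\<alpha> *\<^sub>R M x) $ i $ l" "\<And>l. (\<Sum>i\<in>UNIV. (\<alpha> *\<^sub>R M x) $ i $ l) \<le> \<alpha> * real (m - 1)"
proof -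
  fix i l
  show "0 \<le> (\<alpha> *\<^sub>R M x) $ i $ l"
    unfolding Mentry using a0 Dm_nonneg[OF tt m x0, of "axis l 1" i] by (simp add: axis_def)
next
  fix l
  have "(\<Sum>i\<in>UNIV. (\<alpha> *\<^sub>R M x) $ i $ l) = \<alpha> * (real (m - 1) * sm x ^ (m - 2))"
    unfolding Mentry using sum_Dm[OF tt, of x "axis l 1"] by (simp add: sum_axis sum_distrib_left[symmetric] sm_def)
  also have "\<dots> \<le> \<alpha> * (real (m - 1) * 1)"
    using a0 x0 xs sum_nonneg[of UNIV "\<lambda>i. x $ i"]
    by (intro mult_left_mono power_le_one) (auto simp: sm_def)
  finally show "(\<Sum>i\<in>UNIV. (\<alpha> *\<^sub>R M x) $ i $ l) \<le> \<alpha> * real (m - 1)" by simp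
qed

lemma J_inv:
  assumes x0: "\<And>i. 0 \<le> x $ i" and xs: "sm x \<le> 1"
  shows "invertible (mlpr_J m P \<alpha> x)"
  unfolding J_eq by (rule mmatrix_invertible[OF B_props[OF x0 xs] c1])

lemma M_pos:
  assumes x0: "\<And>i. 0 \<le> x $ i" and xs: "sm x \<le> 1"
    and eq: "z - (\<alpha> *\<^sub>R M x) *v z = w" and w: "\<And>i. 0 \<le> w $ i"
  shows "0 \<le> z $ i"
  by (rule mmatrix_nonneg[OF B_props[OF x0 xs] c1 eq w])

lemma step_eq:
  assumes x0: "\<And>i. 0 \<le> x $ i" and xs: "sm x \<le> 1"
    and x': "x' = x - matrix_inv (mlpr_J m P \<alpha> x) *v f x"
  shows "(x' - x) - (\<alpha> *\<^sub>R M x) *v (x' - x) = f x"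
proof -
  have "mlpr_J m P \<alpha> x *v (matrix_inv (mlpr_J m P \<alpha> x) *v f x) = f x"
    by (rule matrix_inv_right'[OF J_inv[OF x0 xs]])
  then have "(\<alpha> *\<^sub>R M x - mat 1) *v (x - x') = f x" using x' J_eq by simp
  then show ?thesis
    by (rule flip_eq)
qed

end


context setting begin

lemma sm_nonneg: assumes "\<And>i. 0 \<le> x $ i" shows "0 \<le> sm x"
  unfolding sm_def using assms by (simp add: sum_nonneg)

lemma step_props:
  assumes x0: "\<And>i. 0 \<le> x $ i" and xs: "sm x \<le> 1" and f0: "\<And>i. 0 \<le> f x $ i"
    and x': "x' = x - matrix_inv (mlpr_J m P \<alpha> x) *v f x"
  shows "\<And>i. x $ i \<le> x' $ i" "\<And>i. 0 \<le> f x' $ i" "sm x' \<le> 1"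
    "1 - sm x' \<le> \<alpha> * real (m - 1) * (1 - sm x)"
    "1 - sm x' \<le> \<alpha> * real (m - 1) ^ 2 / (1 - \<alpha> * real (m - 1)) * (1 - sm x) ^ 2"
proof -
  have E: "(x' - x) - (\<alpha> *\<^sub>R M x) *v (x' - x) = f x" by (rule step_eq[OF x0 xs x'])
  have d0: "0 \<le> (x' - x) $ i" for i by (rule M_pos[OF x0 xs E f0])
  then show xx': "\<And>i. x $ i \<le> x' $ i" by simp
  have E2: "(x' - x) - \<alpha> *\<^sub>R Dm m P x (x' - x) = G x - x"
    using E unfolding f_eq scaleR_matrix_vector_assoc[symmetric] M_mult by simp
  then have x'G: "x' = G x + \<alpha> *\<^sub>R Dm m P x (x' - x)" by (simp add: algebra_simps)
  show "0 \<le> f x' $ i" for i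
  proof -
    have "f x' $ i = \<alpha> * (flat_apply m P (replicate (m - 1) x') $ i - flat_apply m P (replicate (m - 1) x) $ i - Dm m P x (x' - x) $ i)"
      unfolding f_eq by (subst (2) x'G) (simp add: algebra_simps)
    also have "\<dots> \<ge> 0" using a0 convex_flat[OF tt m x0 xx'] by simp
    finally show ?thesis .
  qed
  define s where "s = sm x"
  define \<Delta> where "\<Delta> = sm (x' - x)"
  have s0: "0 \<le> s" unfolding s_def by (rule sm_nonneg[OF x0])
  have "sm ((x' - x) - (\<alpha> *\<^sub>R M x) *v (x' - x)) = sm (f x)" using E by simp
  then have "\<Delta> - \<alpha> * (real (m - 1) * s ^ (m - 2) * \<Delta>) = \<alpha> * s ^ (m - 1) + (1 - \<alpha>) - s"
    unfolding sm_diff sm_f sm_M scaleR_matrix_vector_assoc[symmetric] sm_scale s_def \<Delta>_def .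
  then have eq: "\<Delta> * (1 - \<alpha> * real (m - 1) * s ^ (m - 1 - 1)) = \<alpha> * s ^ (m - 1) + (1 - \<alpha>) - s"
    by (simp add: algebra_simps numeral_2_eq_2)
  have N: "m - 1 \<ge> 1" using m by simp
  have sx': "sm x' = s + \<Delta>" unfolding s_def \<Delta>_def sm_diff by simp
  note SN = scalar_newton[OF s0 xs[folded s_def] N a0 c1 eq, folded sx']
  show "sm x' \<le> 1" by (rule SN(1))
  show "1 - sm x' \<le> \<alpha> * real (m - 1) * (1 - sm x)" using SN(2) s_def by simp
  show "1 - sm x' \<le> \<alpha> * real (m - 1) ^ 2 / (1 - \<alpha> * real (m - 1)) * (1 - sm x) ^ 2" using SN(3) s_def by simp
qed

lemma step_below:
  assumes x0: "\<And>i. 0 \<le> x $ i" and xs: "sm x \<le> 1" and f0: "\<And>i. 0 \<le> f x $ i"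
    and x': "x' = x - matrix_inv (mlpr_J m P \<alpha> x) *v f x"
    and xy: "\<And>i. x $ i \<le> y $ i" and yfix: "y = G y"
  shows "x' $ i \<le> y $ i"
proof -
  have E: "(x' - x) - (\<alpha> *\<^sub>R M x) *v (x' - x) = f x" by (rule step_eq[OF x0 xs x'])
  have E2: "(x' - x) - \<alpha> *\<^sub>R Dm m P x (x' - x) = G x - x"
    using E unfolding f_eq scaleR_matrix_vector_assoc[symmetric] M_mult by simp
  have Mlin: "M x *v (y - x') = M x *v (y - x) - M x *v (x' - x)"
    by (simp add: matrix_vector_mult_diff_distrib)
  have "(y - x') - (\<alpha> *\<^sub>R M x) *v (y - x') = \<alpha> *\<^sub>R (flat_apply m P (replicate (m - 1) y) - flat_apply m P (replicate (m - 1) x) - Dm m P x (y - x))"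
  proof -
    have "(y - x') - (\<alpha> *\<^sub>R M x) *v (y - x') = (y - x') - \<alpha> *\<^sub>R (Dm m P x (y - x) - Dm m P x (x' - x))"
      unfolding scaleR_matrix_vector_assoc[symmetric] Mlin[unfolded M_mult] M_mult ..
    also have "\<dots> = (y - x) - \<alpha> *\<^sub>R Dm m P x (y - x) - ((x' - x) - \<alpha> *\<^sub>R Dm m P x (x' - x))"
      by (simp add: algebra_simps)
    also have "\<dots> = (y - x) - \<alpha> *\<^sub>R Dm m P x (y - x) - (G x - x)" by (simp only: E2)
    also have "\<dots> = G y - G x - \<alpha> *\<^sub>R Dm m P x (y - x)" by (subst (1) yfix) (simp add: algebra_simps)
    also have "\<dots> = \<alpha> *\<^sub>R (flat_apply m P (replicate (m - 1) y) - flat_apply m P (replicate (m - 1) x) - Dm m P x (y - x))"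
      by (simp add: algebra_simps)
    finally show ?thesis .
  qed
  moreover have "0 \<le> (\<alpha> *\<^sub>R (flat_apply m P (replicate (m - 1) y) - flat_apply m P (replicate (m - 1) x) - Dm m P x (y - x))) $ j" for j
    using a0 convex_flat[OF tt m x0 xy, of j] by simp
  ultimately have "0 \<le> (y - x') $ i" by (rule M_pos[OF x0 xs])
  then show ?thesis by simp
qed

end


context setting begin

lemma f_coord:
  "f x $ i = \<alpha> * (\<Sum>js\<in>{js. length js = m - 1}. P (i # js) * (\<Prod>k<m - 1. x $ (js ! k))) + (1 - \<alpha>) * v $ i - x $ i"
  unfolding f_eq using flat_rep_coord[of m P x i] by simp

lemma f_tendsto:
  assumes "\<And>j. (\<lambda>k. X k $ j) \<longlonglongrightarrow> y $ j"
  shows "(\<lambda>k. f (X k) $ i) \<longlonglongrightarrow> f y $ i"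
  unfolding f_coord by (intro tendsto_intros assms)

end

theorem theorem3p3:
  fixes m :: nat and P :: "'n::finite list \<Rightarrow> real" and v :: "real ^ 'n"
    and \<alpha> :: real and xk :: "nat \<Rightarrow> real ^ 'n"
  assumes "m \<ge> 2"
    and "transition_tensor m P"
    and "stochastic v"
    and "0 \<le> \<alpha>" and "\<alpha> < 1" and "\<alpha> < 1 / (real m - 1)"
    and "xk 0 = 0"
    and "\<And>k. xk (Suc k) = xk k - matrix_inv (mlpr_J m P \<alpha> (xk k)) *v mlpr_f m P \<alpha> v (xk k)"
  shows "\<exists>x. stochastic x \<and> x = \<alpha> *\<^sub>R flat_apply m P (replicate (m - 1) x) + (1 - \<alpha>) *\<^sub>R v
           \<and> (\<forall>y. stochastic y \<and> y = \<alpha> *\<^sub>R flat_apply m P (replicate (m - 1) y) + (1 - \<alpha>) *\<^sub>R v \<longrightarrow> y = x)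
           \<and> (\<forall>k. invertible (mlpr_J m P \<alpha> (xk k)))
           \<and> xk \<longlonglongrightarrow> x
           \<and> (\<exists>C>0. \<forall>\<^sub>F k in sequentially. norm (xk (Suc k) - x) \<le> C * (norm (xk k - x))\<^sup>2)"
proof -
  note m = assms(1) and tt = assms(2) and st = assms(3) and a0 = assms(4) and a1 = assms(5)
    and a2 = assms(6) and x0 = assms(7) and rec = assms(8)
  have rm: "real (m - 1) = real m - 1" using m by simp
  have rpos: "real m - 1 > 0" using m by simp
  have c1: "\<alpha> * real (m - 1) < 1" unfolding rm using a2 rpos by (simp add: less_divide_eq)
  interpret setting m P v \<alpha>
    using m tt st a0 a1 c1 by unfold_locales auto
  define c where "c = \<alpha> * real (m - 1)"
  define K where "K = \<alpha> * real (m - 1) ^ 2 / (1 - \<alpha> * real (m - 1))"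
  have c0: "0 \<le> c" unfolding c_def using a0 by simp
  have K0: "0 \<le> K" unfolding K_def using a0 c1 by simp
  have inv: "(\<forall>i. 0 \<le> xk k $ i) \<and> sm (xk k) \<le> 1 \<and> (\<forall>i. 0 \<le> f (xk k) $ i)" for k
  proof (induction k)
    case 0
    have "0 \<le> f 0 $ i" for i
    proof -
      have "0 \<le> flat_apply m P (replicate (m - 1) 0) $ i"
        by (rule flat_nonneg[OF tt m]) auto
      moreover have "0 \<le> v $ i" using st unfolding stochastic_def by simp
      ultimately show ?thesis unfolding f_eq using a0 a1 by simp
    qed
    then show ?case using x0 by (simp add: sm_def)
  next
    case (Suc k)
    then have h: "\<And>i. 0 \<le> xk k $ i" "sm (xk k) \<le> 1" "\<And>i. 0 \<le> f (xk k) $ i" by auto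
    note SP = step_props[OF h rec]
    have "0 \<le> xk (Suc k) $ i" for i using h(1)[of i] SP(1)[of i] by linarith
    then show ?case using SP by auto
  qed
  have xnn: "\<And>k i. 0 \<le> xk k $ i" and xsm: "\<And>k. sm (xk k) \<le> 1" and fnn: "\<And>k i. 0 \<le> f (xk k) $ i"
    using inv by auto
  note SP = step_props[OF xnn xsm fnn rec]
  have Jinv: "\<forall>k. invertible (mlpr_J m P \<alpha> (xk k))" using J_inv[OF xnn xsm] by blast
  have ubound: "1 - sm (xk k) \<le> c ^ k" for k
  proof (induction k)
    case 0 then show ?case using x0 by (simp add: sm_def)
  next
    case (Suc k)
    have "1 - sm (xk (Suc k)) \<le> c * (1 - sm (xk k))" using SP(4)[of k] c_def by simp
    also have "\<dots> \<le> c * c ^ k" using Suc c0 by (intro mult_left_mono) auto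
    finally show ?case by simp
  qed
  have quad: "1 - sm (xk (Suc k)) \<le> K * (1 - sm (xk k)) ^ 2" for k
    using SP(5)[of k] K_def by simp
  have "\<forall>i. \<exists>l. (\<lambda>k. xk k $ i) \<longlonglongrightarrow> l \<and> (\<forall>k. xk k $ i \<le> l)"
  proof
    fix i
    have "incseq (\<lambda>k. xk k $ i)" by (rule incseq_SucI) (rule SP(1))
    moreover have "\<forall>k. xk k $ i \<le> 1"
    proof
      fix k
      have "xk k $ i \<le> sm (xk k)" by (rule le_sm) (rule xnn)
      then show "xk k $ i \<le> 1" using xsm[of k] by linarith
    qed
    ultimately obtain l where "(\<lambda>k. xk k $ i) \<longlonglongrightarrow> l" "\<forall>k. xk k $ i \<le> l"
      by (rule incseq_convergent)
    then show "\<exists>l. (\<lambda>k. xk k $ i) \<longlonglongrightarrow> l \<and> (\<forall>k. xk k $ i \<le> l)" by blast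
  qed
  then obtain lim where lim: "\<And>i. (\<lambda>k. xk k $ i) \<longlonglongrightarrow> lim i" "\<And>i k. xk k $ i \<le> lim i"
    by metis
  define xs where "xs = (\<chi> i. lim i)"
  have limc: "\<And>i. (\<lambda>k. xk k $ i) \<longlonglongrightarrow> xs $ i" and below: "\<And>i k. xk k $ i \<le> xs $ i"
    using lim unfolding xs_def by auto
  have conv: "xk \<longlonglongrightarrow> xs" by (rule vec_tendstoI) (use limc in auto)
  have xs0: "0 \<le> xs $ i" for i
  proof -
    have "xk 0 $ i \<le> xs $ i" by (rule below)
    then show ?thesis using x0 by simp
  qed
  have smlim: "(\<lambda>k. sm (xk k)) \<longlonglongrightarrow> sm xs" unfolding sm_def by (intro tendsto_sum limc)
  have cpow: "(\<lambda>k. c ^ k) \<longlonglongrightarrow> 0" using c0 c1 c_def by (intro LIMSEQ_power_zero) auto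
  have sm1: "(\<lambda>k. sm (xk k)) \<longlonglongrightarrow> 1"
  proof (rule tendsto_sandwich[of "\<lambda>k. 1 - c ^ k" _ _ "\<lambda>k. 1"])
    show "\<forall>\<^sub>F k in sequentially. 1 - c ^ k \<le> sm (xk k)" using ubound by (simp add: algebra_simps)
    show "\<forall>\<^sub>F k in sequentially. sm (xk k) \<le> 1" using xsm by simp
    show "(\<lambda>k. 1 - c ^ k) \<longlonglongrightarrow> 1" using tendsto_diff[OF tendsto_const cpow, of 1] by simp
  qed simp
  have smxs: "sm xs = 1" using LIMSEQ_unique[OF smlim sm1] .
  have stx: "stochastic xs" unfolding stochastic_def using xs0 smxs by (simp add: sm_def)
  have fzero: "f xs $ i = 0" for i
  proof -
    have t1: "(\<lambda>k. f (xk k) $ i) \<longlonglongrightarrow> f xs $ i" by (rule f_tendsto[OF limc])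
    have t2: "(\<lambda>k. f (xk k) $ i) \<longlonglongrightarrow> 0"
    proof (rule tendsto_sandwich[of "\<lambda>k. 0" _ _ "\<lambda>k. sm (f (xk k))"])
      show "\<forall>\<^sub>F k in sequentially. 0 \<le> f (xk k) $ i" using fnn by simp
      show "\<forall>\<^sub>F k in sequentially. f (xk k) $ i \<le> sm (f (xk k))" using le_sm[OF fnn] by simp
      have "(\<lambda>k. \<alpha> * sm (xk k) ^ (m - 1) + (1 - \<alpha>) - sm (xk k)) \<longlonglongrightarrow> \<alpha> * 1 ^ (m - 1) + (1 - \<alpha>) - 1"
        by (intro tendsto_intros sm1)
      then show "(\<lambda>k. sm (f (xk k))) \<longlonglongrightarrow> 0" unfolding sm_f by simp
    qed simp
    show ?thesis using LIMSEQ_unique[OF t1 t2] .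
  qed
  have xfix: "xs = G xs"
  proof -
    have "f xs = 0" using fzero by (simp add: vec_eq_iff)
    then show ?thesis unfolding f_eq by simp
  qed
  have uniq: "y = xs" if y: "stochastic y" "y = G y" for y
  proof -
    have y0: "\<And>i. 0 \<le> y $ i" using y(1) unfolding stochastic_def by simp
    have yb: "xk k $ i \<le> y $ i" for k i
    proof (induction k arbitrary: i)
      case 0 then show ?case using x0 y0 by simp
    next
      case (Suc k)
      show ?case by (rule step_below[OF xnn xsm fnn rec Suc y(2)])
    qed
    have le: "xs $ i \<le> y $ i" for i
      by (rule LIMSEQ_le_const2[OF limc]) (use yb in auto)
    have "sm (y - xs) = 0" using y(1) smxs unfolding sm_diff stochastic_def by (simp add: sm_def)
    then have "\<forall>i\<in>UNIV. (y - xs) $ i = 0"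
      unfolding sm_def by (subst sum_nonneg_eq_0_iff[symmetric]) (use le in auto)
    then show ?thesis by (simp add: vec_eq_iff)
  qed
  define Cn where "Cn = real CARD('n)"
  have Cn: "(\<Sum>i\<in>(UNIV::'n set). z) = Cn * z" for z :: real unfolding Cn_def by simp
  define C where "C = K * Cn ^ 2 + 1"
  have C0: "C > 0" unfolding C_def using K0 by (simp add: add_nonneg_pos)
  have errsum: "1 - sm (xk k) = (\<Sum>i\<in>UNIV. \<bar>(xk k - xs) $ i\<bar>)" for k
  proof -
    have "(\<Sum>i\<in>UNIV. \<bar>(xk k - xs) $ i\<bar>) = (\<Sum>i\<in>UNIV. xs $ i - xk k $ i)"
    proof (rule sum.cong[OF refl])
      fix i
      have "xk k $ i \<le> xs $ i" by (rule below)
      then show "\<bar>(xk k - xs) $ i\<bar> = xs $ i - xk k $ i" by simp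
    qed
    also have "\<dots> = sm xs - sm (xk k)" by (simp add: sm_def sum_subtractf)
    finally show ?thesis using smxs by simp
  qed
  have qd: "norm (xk (Suc k) - xs) \<le> C * (norm (xk k - xs))\<^sup>2" for k
  proof -
    have "norm (xk (Suc k) - xs) \<le> 1 - sm (xk (Suc k))"
      unfolding errsum by (rule norm_le_l1_cart)
    also have "\<dots> \<le> K * (1 - sm (xk k)) ^ 2" by (rule quad)
    also have "\<dots> \<le> K * (Cn * norm (xk k - xs)) ^ 2"
    proof -
      have "1 - sm (xk k) \<le> (\<Sum>i\<in>(UNIV::'n set). norm (xk k - xs))"
        unfolding errsum by (rule sum_mono) (rule component_le_norm_cart)
      then have "1 - sm (xk k) \<le> Cn * norm (xk k - xs)" by (simp only: Cn)
      moreover have "0 \<le> 1 - sm (xk k)" using xsm[of k] by simp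
      ultimately show ?thesis using K0 by (intro mult_left_mono power_mono) auto
    qed
    also have "\<dots> \<le> C * (norm (xk k - xs))\<^sup>2"
      unfolding C_def by (simp add: power_mult_distrib algebra_simps)
    finally show ?thesis .
  qed
  have ev: "\<exists>C>0. \<forall>\<^sub>F k in sequentially. norm (xk (Suc k) - xs) \<le> C * (norm (xk k - xs))\<^sup>2"
    using C0 qd by (intro exI[of _ C]) (simp add: always_eventually)
  show ?thesis
    apply (rule exI[of _ xs])
    using stx xfix uniq Jinv conv ev by blast
qed


end
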